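(* Let $R$ be a ring and let $A=\sigma(R)\langle x_1,\dots,x_n\rangle$ be a skew PBW extension of $R$, with associated families $\Sigma=\{\sigma_1,\dots,\sigma_n\}$ and $\Delta=\{\delta_1,\dots,\delta_n\}$. If $R$ is a Baer ring, $R$ is $(\Sigma,\Delta)$-compatible, and $R$ satisfies condition (SA1), then $A$ has Property $(a.c.)$ on the right.
   Context: All rings are associative with identity. For $S\subseteq T$ (a ring $T$), $r_T(S)=\{a\in T: Sa=0\}$ and $\ell_T(S)=\{a\in T: aS=0\}$. A ring $A$ is a skew PBW extension of $R$, written $A=\sigma(R)\langle x_1,\dots,x_n\rangle$, if: (i) $R$ is a subring of $A$ with the same identity; (ii) there are elements $x_1,\dots,x_n\in A$ such that $A$ is a free left $R$-module with basis the standard monomials $x^\alpha=x_1^{\alpha_1}\cdots x_n^{\alpha_n}$, $\alpha\in\mathbb N^n$ (with $x^0=1$); (iii) for each $i$ and each nonzero $r\in R$ there is nonzero $c_{i,r}\in R$ with $x_ir-c_{i,r}x_i\in R$; (iv) for all $i,j$ there is nonzero $d_{i,j}\in R$ with $x_jx_i-d_{i,j}x_ix_j\in R+Rx_1+\cdots+Rx_n$. For such $A$ there are injective endomorphisms $\sigma_i$ of $R$ and $\sigma_i$-derivations $\delta_i$ of $R$ with $x_ir=\sigma_i(r)x_i+\delta_i(r)$ for all $r\in R$; $\Sigma=\{\sigma_1,\dots,\sigma_n\}$, $\Delta=\{\delta_1,\dots,\delta_n\}$. For $\alpha\in\mathbb N^n$, $\sigma^\alpha=\sigma_1^{\alpha_1}\circ\cdots\circ\sigma_n^{\alpha_n}$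 and $\delta^\alpha=\delta_1^{\alpha_1}\circ\cdots\circ\delta_n^{\alpha_n}$. $R$ is $\Sigma$-compatible if for all $a,b\in R$ and $\alpha\in\mathbb N^n$: $a\sigma^\alpha(b)=0$ iff $ab=0$; $R$ is $\Delta$-compatible if for all $a,b\in R$ and $\beta\in\mathbb N^n$: $ab=0$ implies $a\delta^\beta(b)=0$; $(\Sigma,\Delta)$-compatible means both. $R$ satisfies condition (SA1) if whenever $fg=0$ for $f=a_0+a_1X_1+\cdots+a_mX_m$ and $g=b_0+b_1Y_1+\cdots+b_tY_t$ in $A$ (with $a_i,b_j\in R$ and $X_i,Y_j$ standard monomials), then $a_ib_j=0$ for all $i,j$. $R$ is a Baer ring if for every nonempty subset $X\subseteq R$ there is an idempotent $e$ with $r_R(X)=eR$. A ring $T$ has Property $(a.c.)$ on the right if for every finitely generated right ideal $I$ of $T$ there is $c\in T$ with $r_T(I)=r_T(cT)$; on the left if for every finitely generated left ideal $I$ there is $c\in T$ with $\ell_T(I)=\ell_T(Tc)$. *)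

theory Defs
  imports Main
begin

text \<open>Conventions: the ring A is the ambient type 'a (class ring_1); R is a subset of it.
 The variables x_1..x_n are represented as x 0, ..., x (n-1).
 Exponent vectors alpha in N^n are functions nat => nat vanishing from n on.\<close>

definition exps :: "nat \<Rightarrow> (nat \<Rightarrow> nat) set" where
  "exps n = {\<alpha>. \<forall>i\<ge>n. \<alpha> i = 0}"

definition mono :: "(nat \<Rightarrow> 'a::ring_1) \<Rightarrow> nat \<Rightarrow> (nat \<Rightarrow> nat) \<Rightarrow> 'a" where
  "mono x n \<alpha> = prod_list (map (\<lambda>i. x i ^ \<alpha> i) [0..<n])"

definition coeffs :: "'a::ring_1 set \<Rightarrow> nat \<Rightarrow> ((nat \<Rightarrow> nat) \<Rightarrow> 'a) \<Rightarrow> bool" where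
  "coeffs R n c \<longleftrightarrow> finite {\<alpha>. c \<alpha> \<noteq> 0} \<and> (\<forall>\<alpha>. c \<alpha> \<in> R) \<and> (\<forall>\<alpha>. c \<alpha> \<noteq> 0 \<longrightarrow> \<alpha> \<in> exps n)"

definition poly_of :: "(nat \<Rightarrow> 'a::ring_1) \<Rightarrow> nat \<Rightarrow> ((nat \<Rightarrow> nat) \<Rightarrow> 'a) \<Rightarrow> 'a" where
  "poly_of x n c = (\<Sum>\<alpha> \<in> {\<alpha>. c \<alpha> \<noteq> 0}. c \<alpha> * mono x n \<alpha>)"

definition subring_one :: "'a::ring_1 set \<Rightarrow> bool" where
  "subring_one R \<longleftrightarrow> 0 \<in> R \<and> 1 \<in> R \<and> (\<forall>a\<in>R. \<forall>b\<in>R. a + b \<in> R \<and> a * b \<in> R) \<and> (\<forall>a\<in>R. - a \<in> R)"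

definition lin1 :: "'a::ring_1 set \<Rightarrow> (nat \<Rightarrow> 'a) \<Rightarrow> nat \<Rightarrow> 'a set" where
  "lin1 R x n = {r0 + (\<Sum>k<n. r k * x k) | r0 r. r0 \<in> R \<and> (\<forall>k. r k \<in> R)}"

definition skew_PBW :: "'a::ring_1 set \<Rightarrow> (nat \<Rightarrow> 'a) \<Rightarrow> nat \<Rightarrow> bool" where
  "skew_PBW R x n \<longleftrightarrow>
     subring_one R \<and>
     (\<forall>a. \<exists>c. coeffs R n c \<and> a = poly_of x n c) \<and>
     (\<forall>c. coeffs R n c \<and> poly_of x n c = 0 \<longrightarrow> (\<forall>\<alpha>. c \<alpha> = 0)) \<and>
     (\<forall>i<n. \<forall>r\<in>R. r \<noteq> 0 \<longrightarrow> (\<exists>c\<in>R. c \<noteq> 0 \<and> x i * r - c * x i \<in> R)) \<and>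
     (\<forall>i<n. \<forall>j<n. \<exists>d\<in>R. d \<noteq> 0 \<and> x j * x i - d * x i * x j \<in> lin1 R x n)"

text \<open>sigma and delta are the maps with x_i r = sigma_i(r) x_i + delta_i(r) on R
 (they are uniquely determined by the skew PBW structure)\<close>
definition skew_maps :: "'a::ring_1 set \<Rightarrow> (nat \<Rightarrow> 'a) \<Rightarrow> nat \<Rightarrow> (nat \<Rightarrow> 'a \<Rightarrow> 'a) \<Rightarrow> (nat \<Rightarrow> 'a \<Rightarrow> 'a) \<Rightarrow> bool" where
  "skew_maps R x n \<sigma> \<delta> \<longleftrightarrow>
     (\<forall>i<n. \<forall>r\<in>R. \<sigma> i r \<in> R \<and> \<delta> i r \<in> R \<and> x i * r = \<sigma> i r * x i + \<delta> i r)"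

definition comp_pow :: "(nat \<Rightarrow> 'b \<Rightarrow> 'b) \<Rightarrow> nat \<Rightarrow> (nat \<Rightarrow> nat) \<Rightarrow> 'b \<Rightarrow> 'b" where
  "comp_pow f n \<alpha> = foldr (\<lambda>i g. (f i ^^ \<alpha> i) \<circ> g) [0..<n] id"

definition Sigma_compatible :: "'a::ring_1 set \<Rightarrow> nat \<Rightarrow> (nat \<Rightarrow> 'a \<Rightarrow> 'a) \<Rightarrow> bool" where
  "Sigma_compatible R n \<sigma> \<longleftrightarrow>
     (\<forall>a\<in>R. \<forall>b\<in>R. \<forall>\<alpha>\<in>exps n. a * comp_pow \<sigma> n \<alpha> b = 0 \<longleftrightarrow> a * b = 0)"

definition Delta_compatible :: "'a::ring_1 set \<Rightarrow> nat \<Rightarrow> (nat \<Rightarrow> 'a \<Rightarrow> 'a) \<Rightarrow> bool" where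
  "Delta_compatible R n \<delta> \<longleftrightarrow>
     (\<forall>a\<in>R. \<forall>b\<in>R. \<forall>\<beta>\<in>exps n. a * b = 0 \<longrightarrow> a * comp_pow \<delta> n \<beta> b = 0)"

definition SA1 :: "'a::ring_1 set \<Rightarrow> (nat \<Rightarrow> 'a) \<Rightarrow> nat \<Rightarrow> bool" where
  "SA1 R x n \<longleftrightarrow>
     (\<forall>c d. coeffs R n c \<and> coeffs R n d \<and> poly_of x n c * poly_of x n d = 0
        \<longrightarrow> (\<forall>\<alpha> \<beta>. c \<alpha> * d \<beta> = 0))"

definition r_ann :: "'a::ring_1 set \<Rightarrow> 'a set \<Rightarrow> 'a set" where
  "r_ann T S = {a \<in> T. \<forall>s\<in>S. s * a = 0}"

definition Baer_subring :: "'a::ring_1 set \<Rightarrow> bool" where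
  "Baer_subring R \<longleftrightarrow>
     (\<forall>X. X \<subseteq> R \<and> X \<noteq> {} \<longrightarrow> (\<exists>e\<in>R. e * e = e \<and> r_ann R X = {e * r | r. r \<in> R}))"

definition right_ideal_gen :: "'a::ring_1 set \<Rightarrow> 'a set" where
  "right_ideal_gen F = {(\<Sum>f\<in>F. f * a f) | a. True}"

definition right_ac :: "'a::ring_1 itself \<Rightarrow> bool" where
  "right_ac _ \<longleftrightarrow>
     (\<forall>F :: 'a set. finite F \<longrightarrow>
        (\<exists>c. r_ann UNIV (right_ideal_gen F) = r_ann UNIV {c * t | t. True}))"

end

theory Submission
  imports Defs
begin

lemma foldr_unit:
  "distinct xs \<Longrightarrow> foldr (\<lambda>j g. (f j ^^ (if j = i then 1 else 0)) \<circ> g) xs id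
     = (if i \<in> set xs then f i else id)"
  by (induction xs) auto

lemma comp_pow_unit:
  assumes "i < n"
  shows "comp_pow f n (\<lambda>j. if j = i then 1 else 0) = f i"
proof -
  have "foldr (\<lambda>j g. (f j ^^ (if j = i then 1 else 0)) \<circ> g) [0..<n] id = f i"
    using foldr_unit[where xs="[0..<n]" and f=f and i=i] assms by simp
  then show ?thesis unfolding comp_pow_def .
qed

lemma unit_exps: "i < n \<Longrightarrow> (\<lambda>j. if j = i then 1 else 0) \<in> exps n"
  by (auto simp: exps_def)

lemma step_M:
  fixes R :: "'a::ring_1 set"
  assumes sm: "skew_maps R x n \<sigma> \<delta>"
    and cp: "\<forall>i<n. \<forall>a\<in>R. \<forall>r\<in>R. a*r=0 \<longrightarrow> a * \<sigma> i r = 0 \<and> a * \<delta> i r = 0"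
    and M: "\<forall>a\<in>R. \<forall>r\<in>R. a*r=0 \<longrightarrow> a*m*r=0"
    and j: "j < n"
  shows "\<forall>a\<in>R. \<forall>r\<in>R. a*r=0 \<longrightarrow> a*(m*x j)*r=0"
proof (intro ballI impI)
  fix a r assume a: "a \<in> R" and r: "r \<in> R" and ar: "a*r=0"
  have e: "x j * r = \<sigma> j r * x j + \<delta> j r" and s: "\<sigma> j r \<in> R" and d: "\<delta> j r \<in> R"
    using sm j r unfolding skew_maps_def by auto
  have "a*(m*x j)*r = (a*m*\<sigma> j r) * x j + a*m*\<delta> j r"
    by (simp add: e mult.assoc distrib_left)
  also have "\<dots> = 0" using M cp j a r ar s d by auto
  finally show "a*(m*x j)*r = 0" .
qed

lemma pow_M:
  fixes R :: "'a::ring_1 set"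
  assumes sm: "skew_maps R x n \<sigma> \<delta>"
    and cp: "\<forall>i<n. \<forall>a\<in>R. \<forall>r\<in>R. a*r=0 \<longrightarrow> a * \<sigma> i r = 0 \<and> a * \<delta> i r = 0"
    and M: "\<forall>a\<in>R. \<forall>r\<in>R. a*r=0 \<longrightarrow> a*m*r=0"
    and j: "j < n"
  shows "\<forall>a\<in>R. \<forall>r\<in>R. a*r=0 \<longrightarrow> a*(m*x j ^ k)*r=0"
proof (induction k)
  case 0 then show ?case using M by simp
next
  case (Suc k)
  have "\<forall>a\<in>R. \<forall>r\<in>R. a*r=0 \<longrightarrow> a*((m*x j ^ k) * x j)*r=0"
    by (rule step_M[OF sm cp Suc j])
  then show ?case by (simp only: power_Suc2 mult.assoc)
qed

lemma mono_M:
  fixes R :: "'a::ring_1 set"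
  assumes sm: "skew_maps R x n \<sigma> \<delta>"
    and cp: "\<forall>i<n. \<forall>a\<in>R. \<forall>r\<in>R. a*r=0 \<longrightarrow> a * \<sigma> i r = 0 \<and> a * \<delta> i r = 0"
  shows "k \<le> n \<Longrightarrow> \<forall>a\<in>R. \<forall>r\<in>R. a*r=0 \<longrightarrow> a*prod_list (map (\<lambda>i. x i ^ \<alpha> i) [0..<k])*r=0"
proof (induction k)
  case 0 then show ?case by simp
next
  case (Suc k)
  then have "\<forall>a\<in>R. \<forall>r\<in>R. a*r=0 \<longrightarrow> a*(prod_list (map (\<lambda>i. x i ^ \<alpha> i) [0..<k]) * x k ^ \<alpha> k)*r=0"
    by (intro pow_M[OF sm cp]) auto
  then show ?case by simp
qed

theorem mainTheorem1:
  fixes R :: "'a::ring_1 set" and x :: "nat \<Rightarrow> 'a" and n :: nat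
    and \<sigma> \<delta> :: "nat \<Rightarrow> 'a \<Rightarrow> 'a"
  assumes "skew_PBW R x n"
    and "skew_maps R x n \<sigma> \<delta>"
    and "Baer_subring R"
    and "Sigma_compatible R n \<sigma>"
    and "Delta_compatible R n \<delta>"
    and "SA1 R x n"
  shows "right_ac TYPE('a)"
proof -
  have cp: "\<forall>i<n. \<forall>a\<in>R. \<forall>r\<in>R. a*r=0 \<longrightarrow> a * \<sigma> i r = 0 \<and> a * \<delta> i r = 0"
  proof (intro allI impI ballI)
    fix i a r assume i: "i < n" and a: "a \<in> R" and r: "r \<in> R" and ar: "a*r = 0"
    show "a * \<sigma> i r = 0 \<and> a * \<delta> i r = 0"
      using assms(4,5) a r ar comp_pow_unit[OF i] unit_exps[OF i]
      unfolding Sigma_compatible_def Delta_compatible_def by metis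
  qed
  have monoM: "\<And>a r \<alpha>. a \<in> R \<Longrightarrow> r \<in> R \<Longrightarrow> a*r = 0 \<Longrightarrow> a * mono x n \<alpha> * r = 0"
    using mono_M[OF assms(2) cp, of n] unfolding mono_def by auto
  have sub: "subring_one R" and surj: "\<And>a. \<exists>c. coeffs R n c \<and> a = poly_of x n c"
    using assms(1) unfolding skew_PBW_def by auto
  show ?thesis unfolding right_ac_def
  proof (intro allI impI)
    fix F :: "'a set" assume "finite F"
    define I where "I = right_ideal_gen F"
    define X where "X = {c \<alpha> | c \<alpha>. coeffs R n c \<and> poly_of x n c \<in> I}"
    have I_right: "h * t \<in> I" if "h \<in> I" for h t
    proof -
      from that obtain a where h: "h = (\<Sum>f\<in>F. f * a f)" unfolding I_def right_ideal_gen_def by auto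
      have "h * t = (\<Sum>f\<in>F. f * (a f * t))" by (simp add: h sum_distrib_right mult.assoc)
      then show ?thesis unfolding I_def right_ideal_gen_def by (intro CollectI exI[of _ "\<lambda>f. a f * t"]) simp
    qed
    have "0 \<in> I" unfolding I_def right_ideal_gen_def
      by (rule CollectI, rule exI[of _ "\<lambda>_. 0"]) simp
    moreover have "coeffs R n (\<lambda>_. 0)" using sub by (simp add: coeffs_def subring_one_def)
    moreover have "poly_of x n (\<lambda>_. 0) = 0" by (simp add: poly_of_def)
    ultimately have "0 \<in> X" unfolding X_def by force
    moreover have "X \<subseteq> R" unfolding X_def coeffs_def by auto
    ultimately obtain e where eR: "e \<in> R" and ee: "e * e = e" and ann: "r_ann R X = {e * r | r. r \<in> R}"
      using assms(3) unfolding Baer_subring_def by blast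
    have eX: "s * e = 0" if "s \<in> X" for s
    proof -
      have "e \<in> r_ann R X" using ann eR sub by (force simp: subring_one_def)
      then show ?thesis using that unfolding r_ann_def by auto
    qed
    have J: "r_ann UNIV I = {e * t | t. True}"
    proof
      show "r_ann UNIV I \<subseteq> {e * t | t. True}"
      proof
        fix z assume z: "z \<in> r_ann UNIV I"
        obtain d where d: "coeffs R n d" and zd: "z = poly_of x n d" using surj by blast
        have "e * d \<beta> = d \<beta>" for \<beta>
        proof -
          have "d \<beta> \<in> r_ann R X"
            unfolding r_ann_def
          proof (intro CollectI conjI ballI)
            show "d \<beta> \<in> R" using d unfolding coeffs_def by auto
            fix s assume "s \<in> X"
            then obtain c \<alpha> where s: "s = c \<alpha>" and c: "coeffs R n c" and cI: "poly_of x n c \<in> I"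
              unfolding X_def by auto
            have "poly_of x n c * poly_of x n d = 0" using z cI zd unfolding r_ann_def by auto
            then show "s * d \<beta> = 0" using assms(6) c d s unfolding SA1_def by blast
          qed
          then obtain r where "d \<beta> = e * r" using ann by auto
          then show ?thesis using ee by (metis mult.assoc)
        qed
        then have "e * z = z" unfolding zd poly_of_def
          by (simp add: sum_distrib_left mult.assoc[symmetric])
        then show "z \<in> {e * t | t. True}" by (metis (mono_tags, lifting) CollectI)
      qed
    next
      show "{e * t | t. True} \<subseteq> r_ann UNIV I"
      proof
        fix z assume "z \<in> {e * t | t. True}"
        then obtain t where zt: "z = e * t" by auto
        have "h * e = 0" if hI: "h \<in> I" for h
        proof -
          obtain c where c: "coeffs R n c" and hc: "h = poly_of x n c" using surj by blast
          have "c \<alpha> * mono x n \<alpha> * e = 0" for \<alpha>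
          proof -
            have "c \<alpha> \<in> X" using c hc hI unfolding X_def by blast
            then have "c \<alpha> * e = 0" by (rule eX)
            moreover have "c \<alpha> \<in> R" using c unfolding coeffs_def by auto
            ultimately show ?thesis using monoM eR by blast
          qed
          then show ?thesis unfolding hc poly_of_def by (simp add: sum_distrib_right)
        qed
        then show "z \<in> r_ann UNIV I" unfolding r_ann_def zt by (simp add: mult.assoc[symmetric])
      qed
    qed
    have te: "t * e = e * t * e" for t
    proof -
      have "t * e \<in> r_ann UNIV I" unfolding r_ann_def
      proof (intro CollectI conjI ballI)
        fix h assume "h \<in> I"
        then have "h * t \<in> I" by (rule I_right)
        moreover have "e \<in> r_ann UNIV I" using J by (metis (mono_tags, lifting) CollectI mult_1_right)
        ultimately show "h * (t * e) = 0" unfolding r_ann_def by (simp add: mult.assoc[symmetric])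
      qed simp
      then obtain s where "t * e = e * s" using J by auto
      then show ?thesis using ee by (metis mult.assoc)
    qed
    have "r_ann UNIV {(1 - e) * t | t. True} = {e * t | t. True}"
    proof
      show "r_ann UNIV {(1 - e) * t | t. True} \<subseteq> {e * t | t. True}"
      proof
        fix z assume "z \<in> r_ann UNIV {(1 - e) * t | t. True}"
        then have "(1 - e) * 1 * z = 0" unfolding r_ann_def by blast
        then have "z = e * z" by (simp add: algebra_simps)
        then show "z \<in> {e * t | t. True}" by blast
      qed
    next
      show "{e * t | t. True} \<subseteq> r_ann UNIV {(1 - e) * t | t. True}"
      proof
        fix z assume "z \<in> {e * t | t. True}"
        then obtain s where zs: "z = e * s" by auto
        have "(1 - e) * t * (e * s) = 0" for t
        proof -
          have "(1 - e) * t * (e * s) = (t * e - e * t * e) * s" by (simp add: algebra_simps)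
          then show ?thesis using te[of t] by simp
        qed
        then show "z \<in> r_ann UNIV {(1 - e) * t | t. True}" unfolding r_ann_def zs by auto
      qed
    qed
    then show "\<exists>c. r_ann UNIV (right_ideal_gen F) = r_ann UNIV {c * t |t. True}"
      using J unfolding I_def by metis
  qed
qed

end
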